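(* Let $(\mathcal G,k)$ be a quadratic Lie algebra, $f$ a linear endomorphism of $\mathcal G$ with $f([x,y])-[f(x),f(y)]\in\mathcal Z(\mathcal G)$ for all $x,y$, and $d$ an invertible linear endomorphism of $\mathcal G$ with $d[x,y]=[dx,fy]+[fx,dy]$ for all $x,y\in\mathcal G$. Then the left invariant semi-Riemannian metric on any connected Lie group with Lie algebra $\mathcal G$ defined by $\langle x,y\rangle=k(dx,dy)$ is flat, and its Levi-Civita product is $xy=d^{-1}[fx,dy]$.
   Context: A quadratic Lie algebra $(\mathcal G,k)$ is a real Lie algebra with a nondegenerate symmetric bilinear form $k$ such that each $\mathrm{ad}_x$ is $k$-skew-symmetric. $\mathcal Z(\mathcal G)$ is the center. The Levi-Civita product is the bilinear product on $\mathcal G$ given by $(xy)^+=\nabla_{x^+}y^+$ for the Levi-Civita connection $\nabla$ and left invariant vector fields $x^+$; it is characterized by the Koszul formula $2\langle xy,z\rangle=\langle[x,y],z\rangle-\langle[y,z],x\rangle+\langle[z,x],y\rangle$. *)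

theory Defs
  imports "HOL-Analysis.Analysis"
begin

definition lie_algebra :: "('a::euclidean_space \<Rightarrow> 'a \<Rightarrow> 'a) \<Rightarrow> bool" where
  "lie_algebra br \<longleftrightarrow> bilinear br \<and> (\<forall>x. br x x = 0) \<and>
     (\<forall>x y z. br x (br y z) + br y (br z x) + br z (br x y) = 0)"

definition quadratic_lie_algebra ::
  "('a::euclidean_space \<Rightarrow> 'a \<Rightarrow> 'a) \<Rightarrow> ('a \<Rightarrow> 'a \<Rightarrow> real) \<Rightarrow> bool" where
  "quadratic_lie_algebra br k \<longleftrightarrow> lie_algebra br \<and> bilinear k \<and>
     (\<forall>x y. k x y = k y x) \<and> (\<forall>x. (\<forall>y. k x y = 0) \<longrightarrow> x = 0) \<and>
     (\<forall>x y z. k (br x y) z + k y (br x z) = 0)"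

definition lie_center :: "('a::euclidean_space \<Rightarrow> 'a \<Rightarrow> 'a) \<Rightarrow> 'a set" where
  "lie_center br = {z. \<forall>x. br z x = 0}"

text \<open>Levi-Civita product of the left-invariant metric g on the Lie algebra,
  characterized by the Koszul formula.\<close>
definition levi_civita_product ::
  "('a::euclidean_space \<Rightarrow> 'a \<Rightarrow> 'a) \<Rightarrow> ('a \<Rightarrow> 'a \<Rightarrow> real) \<Rightarrow> 'a \<Rightarrow> 'a \<Rightarrow> 'a" where
  "levi_civita_product br g x y =
     (THE w. \<forall>z. 2 * g w z = g (br x y) z - g (br y z) x + g (br z x) y)"

definition left_invariant_flat ::
  "('a::euclidean_space \<Rightarrow> 'a \<Rightarrow> 'a) \<Rightarrow> ('a \<Rightarrow> 'a \<Rightarrow> real) \<Rightarrow> bool" where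
  "left_invariant_flat br g \<longleftrightarrow>
     (\<forall>x y z. levi_civita_product br g x (levi_civita_product br g y z)
            - levi_civita_product br g y (levi_civita_product br g x z)
            - levi_civita_product br g (br x y) z = 0)"

end

theory Submission
  imports Defs
begin

lemma br_antisym:
  assumes "lie_algebra br" shows "br y x = - br x y"
proof -
  have b: "bilinear br" and z: "\<And>x. br x x = 0" using assms by (auto simp: lie_algebra_def)
  have "0 = br (x+y) (x+y)" using z by simp
  also have "\<dots> = br x x + br x y + br y x + br y y"
    using b by (simp add: bilinear_ladd bilinear_radd)
  finally show ?thesis using z by (simp add: eq_neg_iff_add_eq_0 add.commute)
qed

lemma br_jac:
  assumes "lie_algebra br" shows "br a (br b c) - br b (br a c) - br (br a b) c = 0"
proof -
  have b: "bilinear br" and j: "br a (br b c) + br b (br c a) + br c (br a b) = 0"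
    using assms by (auto simp: lie_algebra_def)
  have "br b (br c a) = - br b (br a c)" using br_antisym[OF assms, where y=c and x=a] b
    by (simp add: bilinear_rneg)
  moreover have "br c (br a b) = - br (br a b) c" using br_antisym[OF assms, where y=c and x="br a b"] by simp
  ultimately show ?thesis using j by (simp add: algebra_simps)
qed

lemma k_cyc:
  assumes "quadratic_lie_algebra br k" shows "k (br a b) c = k (br b c) a"
proof -
  have la: "lie_algebra br" and bk: "bilinear k" and s: "\<And>x y. k x y = k y x"
    and inv: "\<And>x y z. k (br x y) z + k y (br x z) = 0"
    using assms by (auto simp: quadratic_lie_algebra_def)
  have "k (br b c) a = - k c (br b a)" using inv[of b c a] by simp
  also have "\<dots> = k c (br a b)" using br_antisym[OF la, where y=b and x=a] bk by (simp add: bilinear_rneg)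
  also have "\<dots> = k (br a b) c" using s by simp
  finally show ?thesis by simp
qed

theorem mainTheorem15:
  fixes br :: "'a::euclidean_space \<Rightarrow> 'a \<Rightarrow> 'a"
    and k :: "'a \<Rightarrow> 'a \<Rightarrow> real"
    and f d :: "'a \<Rightarrow> 'a"
  assumes "quadratic_lie_algebra br k"
    and "linear f"
    and "\<forall>x y. f (br x y) - br (f x) (f y) \<in> lie_center br"
    and "linear d" and "bij d"
    and "\<forall>x y. d (br x y) = br (d x) (f y) + br (f x) (d y)"
  shows "left_invariant_flat br (\<lambda>x y. k (d x) (d y)) \<and>
         (\<forall>x y. levi_civita_product br (\<lambda>x y. k (d x) (d y)) x y = inv d (br (f x) (d y)))"
proof -
  note q = assms(1)
  have la: "lie_algebra br" and bk: "bilinear k" and s: "\<And>x y. k x y = k y x"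
    and nd: "\<And>x. (\<forall>y. k x y = 0) \<Longrightarrow> x = 0"
    using q by (auto simp: quadratic_lie_algebra_def)
  have bb: "bilinear br" using la by (simp add: lie_algebra_def)
  have ld: "linear d" and bd: "bij d" using assms by auto
  have dinv: "d (inv d u) = u" for u using bd by (simp add: bij_is_surj surj_f_inv_f)
  have invd: "inv d (d u) = u" for u using bd by (simp add: bij_is_inj)
  have linv: "linear (inv d)" using inj_linear_imp_inv_linear ld bd bij_is_inj by blast
  define g where "g = (\<lambda>x y. k (d x) (d y))"
  define P where "P = (\<lambda>x y. inv d (br (f x) (d y)))"
  have koz: "2 * g (P x y) z = g (br x y) z - g (br y z) x + g (br z x) y" for x y z
  proof -
    have e: "\<And>a b. d (br a b) = br (d a) (f b) + br (f a) (d b)" using assms(6) by auto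
    have "g (br x y) z - g (br y z) x + g (br z x) y
       = k (br (d x) (f y)) (d z) + k (br (f x) (d y)) (d z)
         - (k (br (d y) (f z)) (d x) + k (br (f y) (d z)) (d x))
         + (k (br (d z) (f x)) (d y) + k (br (f z) (d x)) (d y))"
      unfolding g_def e using bk by (simp add: bilinear_ladd)
    also have "\<dots> = 2 * k (br (f x) (d y)) (d z)"
      using k_cyc[OF q, of "d x" "f y" "d z"] k_cyc[OF q, of "d y" "f z" "d x"]
        k_cyc[OF q, of "d z" "f x" "d y"] by simp
    finally show ?thesis unfolding g_def P_def dinv by simp
  qed
  have lc: "levi_civita_product br g x y = P x y" for x y
    unfolding levi_civita_product_def
  proof (rule the_equality)
    show "\<forall>z. 2 * g (P x y) z = g (br x y) z - g (br y z) x + g (br z x) y" using koz by blast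
  next
    fix w assume h: "\<forall>z. 2 * g w z = g (br x y) z - g (br y z) x + g (br z x) y"
    have "k (d w - d (P x y)) u = 0" for u
    proof -
      have "g w (inv d u) = g (P x y) (inv d u)" using h[rule_format, of "inv d u"] koz[of x y "inv d u"] by linarith
      thus ?thesis unfolding g_def dinv using bk by (simp add: bilinear_lsub)
    qed
    hence "d w - d (P x y) = 0" using nd by blast
    hence "d w = d (P x y)" by simp
    thus "w = P x y" using bd by (metis invd)
  qed
  have flat: "P x (P y z) - P y (P x z) - P (br x y) z = 0" for x y z
  proof -
    have c: "br (f (br x y)) (d z) = br (br (f x) (f y)) (d z)"
    proof -
      have "br (f (br x y) - br (f x) (f y)) (d z) = 0"
        using assms(3) unfolding lie_center_def by blast
      thus ?thesis using bb by (simp add: bilinear_lsub)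
    qed
    have "P x (P y z) - P y (P x z) - P (br x y) z
        = inv d (br (f x) (br (f y) (d z)) - br (f y) (br (f x) (d z)) - br (br (f x) (f y)) (d z))"
      unfolding P_def dinv c using linv by (simp add: linear_diff)
    also have "\<dots> = 0" using br_jac[OF la] linv by (simp add: linear_0)
    finally show ?thesis .
  qed
  show ?thesis unfolding left_invariant_flat_def g_def[symmetric] lc
    using flat by (simp add: P_def)
qed

end
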